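(* Let $(\Gamma,\tau)$ be a $z$-oriented triangulation of a connected closed $2$-dimensional surface, with transition digraph $\Gamma_{\tau}$ and Markov chain $\mathcal{X}_{\tau}$. The following are equivalent: (1) $\mathcal{X}_{\tau}$ is aperiodic; (2) $\mathcal{X}_{\tau}$ is ergodic; (3) there exists a closed directed walk in $\Gamma_{\tau}$ whose length is not divisible by $3$.
   Context: A triangulation $\Gamma$ of a connected closed surface $M$ (not necessarily orientable) is a closed $2$-cell embedding of a connected finite simple graph in $M$ all of whose faces are triangles. Two edges are adjacent if distinct and in a common face; two faces are adjacent if distinct and their intersection is an edge. A zigzag is a sequence of edges $(e_i)_{i\in\mathbb{N}}$ such that for every $i$: $e_i,e_{i+1}$ are adjacent, the faces containing $e_i,e_{i+1}$ and $e_{i+1},e_{i+2}$ are adjacent, and $e_i,e_{i+2}$ are disjoint; it is a cyclic sequence, equivalently a cyclic vertex sequence $v_1,\dots,v_n$ with $e_i=v_iv_{i+1}$, traversing $e_i$ from $v_i$ to $v_{i+1}$. A $z$-orientation $\tau$ is a set of zigzags containing exactly one of $Z,Z^{-1}$ (reversed zigzag) for every zigzag $Z$. Every edge is traversed exactly twice in total by zigzags of $\tau$; it is of type I if in opposite directions, of type II if in the same direction (then regarded as directed that way). Each face has either two type I edges and one type II edge (type I) or three type II edges forming a directed cycle (type II). For $v\in V=\{v_1,\dots,v_n\}$ let $d(v)$ be the number of type I edges at $v$ plus twice the number of type II edges directed out of $v$. Set $p_{ij}=1/d(v_i)$ if $v_iv_j$ is a type I edge, $p_{ij}=2/d(v_i)$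 if $v_iv_j$ is a type II edge directed from $v_i$ to $v_j$, $p_{ij}=0$ otherwise. $\Gamma_{\tau}$ is the digraph on $V$ with edge $v_i\to v_j$ iff $p_{ij}>0$, and $\mathcal{X}_{\tau}$ is the time-homogeneous Markov chain on $V$ with transition matrix $[p_{ij}]$. Ergodic means irreducible and aperiodic. The length of a walk counts edges with multiplicity. *)

theory Defs
  imports Complex_Main
begin

text \<open>A triangulation is given by its set of faces F; each face is the 3-element set
of its vertices. Vertices are the union of the faces, edges are the 2-subsets of faces.\<close>

definition tri_vertices :: "'a set set \<Rightarrow> 'a set" where
  "tri_vertices F = \<Union>F"

definition tri_edges :: "'a set set \<Rightarrow> 'a set set" where
  "tri_edges F = {e. card e = 2 \<and> (\<exists>f\<in>F. e \<subseteq> f)}"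

definition link_rel :: "'a set set \<Rightarrow> 'a \<Rightarrow> ('a \<times> 'a) set" where
  "link_rel F v = {(a, b). {v, a, b} \<in> F \<and> a \<noteq> b \<and> v \<noteq> a \<and> v \<noteq> b}"

definition graph_adj :: "'a set set \<Rightarrow> ('a \<times> 'a) set" where
  "graph_adj F = {(u, w). {u, w} \<in> tri_edges F}"

definition closed_surface_triangulation :: "'a set set \<Rightarrow> bool" where
  "closed_surface_triangulation F \<longleftrightarrow>
     finite F \<and> F \<noteq> {} \<and>
     (\<forall>f\<in>F. card f = 3) \<and>
     \<comment> \<open>every edge lies in exactly two faces\<close>
     (\<forall>e\<in>tri_edges F. card {f\<in>F. e \<subseteq> f} = 2) \<and>
     \<comment> \<open>the link of every vertex is connected (hence a single cycle): surface condition\<close>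
     (\<forall>v\<in>tri_vertices F. \<forall>a b. {v, a} \<in> tri_edges F \<and> {v, b} \<in> tri_edges F
          \<longrightarrow> (a, b) \<in> (link_rel F v)\<^sup>*) \<and>
     \<comment> \<open>connectedness\<close>
     (\<forall>u\<in>tri_vertices F. \<forall>w\<in>tri_vertices F. (u, w) \<in> (graph_adj F)\<^sup>*)"

text \<open>A zigzag is represented by its (bi-infinite, cyclic) vertex sequence z with
edges e_i = {z i, z (i+1)}, the edge e_i being traversed from z i to z (i+1).\<close>

definition zigzag :: "'a set set \<Rightarrow> (int \<Rightarrow> 'a) \<Rightarrow> bool" where
  "zigzag F z \<longleftrightarrow>
     (\<forall>i::int. let e = (\<lambda>j. {z j, z (j + 1)}) in
        e i \<in> tri_edges F \<and>
        \<comment> \<open>e_i, e_{i+1} adjacent\<close>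
        e i \<noteq> e (i + 1) \<and> (\<exists>f\<in>F. e i \<subseteq> f \<and> e (i + 1) \<subseteq> f) \<and>
        \<comment> \<open>the faces containing e_i,e_{i+1} and e_{i+1},e_{i+2} are adjacent\<close>
        (\<forall>f\<in>F. \<forall>g\<in>F. e i \<union> e (i + 1) \<subseteq> f \<and> e (i + 1) \<union> e (i + 2) \<subseteq> g
             \<longrightarrow> f \<noteq> g \<and> f \<inter> g \<in> tri_edges F) \<and>
        \<comment> \<open>e_i, e_{i+2} disjoint\<close>
        e i \<inter> e (i + 2) = {})"

definition zz_shift :: "(int \<Rightarrow> 'a) \<Rightarrow> int \<Rightarrow> (int \<Rightarrow> 'a)" where
  "zz_shift z k = (\<lambda>i. z (i + k))"

definition zz_rev :: "(int \<Rightarrow> 'a) \<Rightarrow> (int \<Rightarrow> 'a)" where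
  "zz_rev z = (\<lambda>i. z (- i))"

text \<open>A z-orientation is a set of zigzags (each zigzag being the class of its vertex
sequences under shifting, so tau is closed under shifts) containing exactly one of
Z and its reverse for every zigzag Z.\<close>
definition z_orientation :: "'a set set \<Rightarrow> (int \<Rightarrow> 'a) set \<Rightarrow> bool" where
  "z_orientation F \<tau> \<longleftrightarrow>
     (\<forall>z\<in>\<tau>. zigzag F z) \<and>
     (\<forall>z\<in>\<tau>. \<forall>k. zz_shift z k \<in> \<tau>) \<and>
     (\<forall>z. zigzag F z \<longrightarrow> (z \<in> \<tau> \<longleftrightarrow> zz_rev z \<notin> \<tau>))"

text \<open>Number of traversals of the edge xy from x to y by the zigzags of tau, counted
with multiplicity: each occurrence corresponds to exactly one shifted representative
starting with x, y.\<close>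
definition traversals :: "(int \<Rightarrow> 'a) set \<Rightarrow> 'a \<Rightarrow> 'a \<Rightarrow> nat" where
  "traversals \<tau> x y = card {z\<in>\<tau>. z 0 = x \<and> z 1 = y}"

definition typeI_edge :: "'a set set \<Rightarrow> (int \<Rightarrow> 'a) set \<Rightarrow> 'a \<Rightarrow> 'a \<Rightarrow> bool" where
  "typeI_edge F \<tau> x y \<longleftrightarrow> {x, y} \<in> tri_edges F \<and> traversals \<tau> x y = 1 \<and> traversals \<tau> y x = 1"

definition typeII_edge :: "'a set set \<Rightarrow> (int \<Rightarrow> 'a) set \<Rightarrow> 'a \<Rightarrow> 'a \<Rightarrow> bool" where
  "typeII_edge F \<tau> x y \<longleftrightarrow> {x, y} \<in> tri_edges F \<and> traversals \<tau> x y = 2 \<and> traversals \<tau> y x = 0"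

definition zdeg :: "'a set set \<Rightarrow> (int \<Rightarrow> 'a) set \<Rightarrow> 'a \<Rightarrow> nat" where
  "zdeg F \<tau> v = card {u. typeI_edge F \<tau> v u} + 2 * card {u. typeII_edge F \<tau> v u}"

definition ztrans :: "'a set set \<Rightarrow> (int \<Rightarrow> 'a) set \<Rightarrow> 'a \<Rightarrow> 'a \<Rightarrow> real" where
  "ztrans F \<tau> vi vj =
     (if typeI_edge F \<tau> vi vj then 1 / real (zdeg F \<tau> vi)
      else if typeII_edge F \<tau> vi vj then 2 / real (zdeg F \<tau> vi)
      else 0)"

definition zarc :: "'a set set \<Rightarrow> (int \<Rightarrow> 'a) set \<Rightarrow> 'a \<Rightarrow> 'a \<Rightarrow> bool" where
  "zarc F \<tau> vi vj \<longleftrightarrow> ztrans F \<tau> vi vj > 0"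

fun nstep :: "'a set \<Rightarrow> ('a \<Rightarrow> 'a \<Rightarrow> real) \<Rightarrow> nat \<Rightarrow> 'a \<Rightarrow> 'a \<Rightarrow> real" where
  "nstep S P 0 i j = (if i = j then 1 else 0)"
| "nstep S P (Suc n) i j = (\<Sum>k\<in>S. nstep S P n i k * P k j)"

definition mc_irreducible :: "'a set \<Rightarrow> ('a \<Rightarrow> 'a \<Rightarrow> real) \<Rightarrow> bool" where
  "mc_irreducible S P \<longleftrightarrow> (\<forall>i\<in>S. \<forall>j\<in>S. \<exists>n. nstep S P n i j > 0)"

definition mc_period :: "'a set \<Rightarrow> ('a \<Rightarrow> 'a \<Rightarrow> real) \<Rightarrow> 'a \<Rightarrow> nat" where
  "mc_period S P i = Gcd {n. n > 0 \<and> nstep S P n i i > 0}"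

definition mc_aperiodic :: "'a set \<Rightarrow> ('a \<Rightarrow> 'a \<Rightarrow> real) \<Rightarrow> bool" where
  "mc_aperiodic S P \<longleftrightarrow> (\<forall>i\<in>S. mc_period S P i = 1)"

definition mc_ergodic :: "'a set \<Rightarrow> ('a \<Rightarrow> 'a \<Rightarrow> real) \<Rightarrow> bool" where
  "mc_ergodic S P \<longleftrightarrow> mc_irreducible S P \<and> mc_aperiodic S P"

definition closed_walk :: "('a \<Rightarrow> 'a \<Rightarrow> bool) \<Rightarrow> 'a list \<Rightarrow> bool" where
  "closed_walk A xs \<longleftrightarrow> length xs \<ge> 2 \<and> hd xs = last xs \<and>
     (\<forall>i < length xs - 1. A (xs ! i) (xs ! (i + 1)))"

definition walk_length :: "'a list \<Rightarrow> nat" where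
  "walk_length xs = length xs - 1"

end

theory Submission
  imports Defs
begin

definition good :: "'a set set \<Rightarrow> 'a \<Rightarrow> 'a \<Rightarrow> 'a \<Rightarrow> bool" where
  "good F a b c \<longleftrightarrow> {a,b,c} \<in> F \<and> a \<noteq> b \<and> b \<noteq> c \<and> a \<noteq> c"

definition zz :: "'a set set \<Rightarrow> (int \<Rightarrow> 'a) \<Rightarrow> bool" where
  "zz F z \<longleftrightarrow> (\<forall>i. good F (z i) (z (i+1)) (z (i+2)) \<and> z (i+3) \<noteq> z i)"

lemma card3_sub_eq:
  assumes "card f = 3" "{a,b,c} \<subseteq> f" "a \<noteq> b" "b \<noteq> c" "a \<noteq> c"
  shows "f = {a,b,c}"
proof -
  have "finite f" using assms(1) by (metis card.infinite zero_neq_numeral)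
  moreover have "card {a,b,c} = 3" using assms by auto
  ultimately show ?thesis using assms card_subset_eq by metis
qed

lemma zigzag_zz:
  assumes c3: "\<forall>f\<in>F. card f = 3"
  shows "zigzag F z \<longleftrightarrow> zz F z"
proof
  assume Z: "zigzag F z"
  show "zz F z" unfolding zz_def
  proof
    fix i
    from Z have A: "{z i, z (i+1)} \<in> tri_edges F"
      and B: "\<exists>f\<in>F. {z i, z (i+1)} \<subseteq> f \<and> {z (i+1), z (i+2)} \<subseteq> f"
      and D: "{z i, z (i+1)} \<inter> {z (i+2), z (i+3)} = {}"
      unfolding zigzag_def Let_def by (auto simp: add.assoc)
    from A have "z i \<noteq> z (i+1)" unfolding tri_edges_def by (auto simp: card_insert_if split: if_splits)
    moreover from D have "z i \<noteq> z (i+2)" "z i \<noteq> z (i+3)" "z (i+1) \<noteq> z (i+2)" by auto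
    moreover from B obtain f where "f \<in> F" "{z i, z (i+1), z (i+2)} \<subseteq> f" by auto
    ultimately show "good F (z i) (z (i+1)) (z (i+2)) \<and> z (i+3) \<noteq> z i"
      unfolding good_def using card3_sub_eq[of f] c3 by metis
  qed
next
  assume Z: "zz F z"
  show "zigzag F z" unfolding zigzag_def
  proof
    fix i
    from Z have g0: "good F (z i) (z (i+1)) (z (i+2))" "z (i+3) \<noteq> z i"
      and g1: "good F (z (i+1)) (z (i+2)) (z (i+3))" 
      unfolding zz_def by (auto dest: spec[of _ "i+1"] simp: add.assoc)
    have E: "{x, y} \<in> tri_edges F" if "x \<noteq> y" "{x,y} \<subseteq> f" "f \<in> F" for x y f
      using that unfolding tri_edges_def by auto
    have eq: "i+1+1 = i+2" "i+1+1+1 = i+3" "i+2+1 = i+3" by simp_all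
    show "let e = \<lambda>j. {z j, z (j + 1)} in e i \<in> tri_edges F \<and>
        e i \<noteq> e (i + 1) \<and> (\<exists>f\<in>F. e i \<subseteq> f \<and> e (i + 1) \<subseteq> f) \<and>
        (\<forall>f\<in>F. \<forall>g\<in>F. e i \<union> e (i + 1) \<subseteq> f \<and> e (i + 1) \<union> e (i + 2) \<subseteq> g
             \<longrightarrow> f \<noteq> g \<and> f \<inter> g \<in> tri_edges F) \<and>
        e i \<inter> e (i + 2) = {}"
    unfolding Let_def eq
    proof (intro conjI ballI impI)
      show "{z i, z (i + 1)} \<in> tri_edges F" using g0 E[of "z i" "z (i+1)"] unfolding good_def by auto
      show "{z i, z (i + 1)} \<noteq> {z (i + 1), z (i + 2)}" using g0 unfolding good_def
        by (auto simp: add.assoc doubleton_eq_iff)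
      show "\<exists>f\<in>F. {z i, z (i + 1)} \<subseteq> f \<and> {z (i + 1), z (i + 2)} \<subseteq> f"
        using g0 unfolding good_def by (auto simp: add.assoc)
      show "{z i, z (i + 1)} \<inter> {z (i + 2), z (i+3)} = {}"
        using g0 g1 unfolding good_def by (auto simp: add.assoc)
    next
      fix f g assume fg: "f \<in> F" "g \<in> F"
        "{z i, z (i + 1)} \<union> {z (i + 1), z (i + 2)} \<subseteq> f \<and>
         {z (i + 1), z (i + 2)} \<union> {z (i + 2), z (i+3)} \<subseteq> g"
      have f: "f = {z i, z (i+1), z (i+2)}" using fg g0 c3 card3_sub_eq[of f]
        unfolding good_def by (auto simp: add.assoc)
      have g: "g = {z (i+1), z (i+2), z (i+3)}" using fg g1 c3 card3_sub_eq[of g]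
        unfolding good_def by (auto simp: add.assoc)
      show "f \<noteq> g" using f g g0 g1 unfolding good_def by auto
      have "f \<inter> g = {z (i+1), z (i+2)}" using f g g0 g1 unfolding good_def by auto
      then show "f \<inter> g \<in> tri_edges F" using E[of "z (i+1)" "z (i+2)" f] fg(1) f g1
        unfolding good_def by auto
    qed
  qed
qed

lemma nstep_nonneg:
  assumes "\<And>x y. P x y \<ge> 0"
  shows "nstep S P n i j \<ge> 0"
  by (induction n arbitrary: j) (auto intro!: sum_nonneg mult_nonneg_nonneg assms)

lemma nstep_pos:
  assumes fin: "finite S" and nn: "\<And>x y. P x y \<ge> 0" and inS: "\<And>x y. P x y > 0 \<Longrightarrow> x \<in> S"
  shows "nstep S P n i j > 0 \<longleftrightarrow> (i,j) \<in> {(x,y). P x y > 0} ^^ n"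
proof (induction n arbitrary: j)
  case 0 thus ?case by simp
next
  case (Suc n)
  have tnn: "\<forall>k\<in>S. nstep S P n i k * P k j \<ge> 0"
    using nstep_nonneg[of P] nn by (auto intro: mult_nonneg_nonneg)
  have "nstep S P (Suc n) i j > 0 \<longleftrightarrow> (\<exists>k\<in>S. nstep S P n i k * P k j > 0)"
  proof
    assume "nstep S P (Suc n) i j > 0"
    hence "(\<Sum>k\<in>S. nstep S P n i k * P k j) > 0" by simp
    thus "\<exists>k\<in>S. nstep S P n i k * P k j > 0"
      by (metis (no_types, lifting) linorder_not_le sum_nonpos)
  next
    assume "\<exists>k\<in>S. nstep S P n i k * P k j > 0"
    then obtain k where "k \<in> S" "nstep S P n i k * P k j > 0" by blast
    hence "(\<Sum>k\<in>S. nstep S P n i k * P k j) > 0"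
      using sum_pos2[OF fin, of k "\<lambda>k. nstep S P n i k * P k j"] tnn by blast
    thus "nstep S P (Suc n) i j > 0" by simp
  qed
  also have "\<dots> \<longleftrightarrow> (\<exists>k. nstep S P n i k > 0 \<and> P k j > 0)"
  proof -
    have "nstep S P n i k * P k j > 0 \<longleftrightarrow> nstep S P n i k > 0 \<and> P k j > 0" for k
      using nstep_nonneg[of P S n i k] nn[of k j] by (auto simp: zero_less_mult_iff)
    thus ?thesis using inS by blast
  qed
  also have "\<dots> \<longleftrightarrow> (i,j) \<in> {(x,y). P x y > 0} ^^ Suc n"
    using Suc.IH by auto
  finally show ?case .
qed

locale tri =
  fixes F :: "'a set set" and \<tau> :: "(int \<Rightarrow> 'a) set"
  assumes cst: "closed_surface_triangulation F" and zo: "z_orientation F \<tau>"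
begin

lemma c3: "f \<in> F \<Longrightarrow> card f = 3"
  using cst unfolding closed_surface_triangulation_def by auto

lemma two: "e \<in> tri_edges F \<Longrightarrow> card {f\<in>F. e \<subseteq> f} = 2"
  using cst unfolding closed_surface_triangulation_def by auto

lemma finF: "finite F" using cst unfolding closed_surface_triangulation_def by auto

lemma edgeI: "a \<noteq> b \<Longrightarrow> {a,b} \<subseteq> f \<Longrightarrow> f \<in> F \<Longrightarrow> {a,b} \<in> tri_edges F"
  unfolding tri_edges_def by auto

lemma other_face:
  assumes "f \<in> F" "g \<in> F" "h \<in> F" "{a,b} \<subseteq> f" "{a,b} \<subseteq> g" "{a,b} \<subseteq> h" "a \<noteq> b"
    "f \<noteq> g" "f \<noteq> h"
  shows "g = h"
proof (rule ccontr)
  assume "g \<noteq> h"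
  have "{a,b} \<in> tri_edges F" using edgeI assms by blast
  hence c: "card {f\<in>F. {a,b} \<subseteq> f} = 2" by (rule two)
  have "{f,g,h} \<subseteq> {f\<in>F. {a,b} \<subseteq> f}" using assms by auto
  moreover have "finite {f\<in>F. {a,b} \<subseteq> f}" using finF by auto
  ultimately have "card {f,g,h} \<le> 2" using c card_mono by metis
  moreover have "card {f,g,h} = 3" using assms \<open>g \<noteq> h\<close> by auto
  ultimately show False by simp
qed

lemma opp_ex:
  assumes "good F a b c"
  shows "\<exists>d. good F b c d \<and> d \<noteq> a"
proof -
  have e: "{b,c} \<in> tri_edges F" using assms edgeI unfolding good_def by blast
  hence c: "card {f\<in>F. {b,c} \<subseteq> f} = 2" by (rule two)
  have "\<exists>g\<in>F. {b,c} \<subseteq> g \<and> g \<noteq> {a,b,c}"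
  proof (rule ccontr)
    assume "\<not> ?thesis"
    hence "{f\<in>F. {b,c} \<subseteq> f} \<subseteq> {{a,b,c}}" by auto
    hence "card {f\<in>F. {b,c} \<subseteq> f} \<le> card {{a,b,c}}" by (intro card_mono) auto
    hence "card {f\<in>F. {b,c} \<subseteq> f} \<le> 1" by simp
    with c show False by simp
  qed
  then obtain g where g: "g \<in> F" "{b,c} \<subseteq> g" "g \<noteq> {a,b,c}" by auto
  have "card g = 3" using g c3 by auto
  have "\<not> g \<subseteq> {b,c}"
  proof
    assume "g \<subseteq> {b,c}"
    hence "card g \<le> card {b,c}" by (intro card_mono) auto
    also have "\<dots> \<le> 2" by (simp add: card_insert_if)
    finally show False using \<open>card g = 3\<close> by simp
  qed
  then obtain d where d: "d \<in> g" "d \<noteq> b" "d \<noteq> c" by auto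
  have bc: "b \<noteq> c" using assms unfolding good_def by auto
  have gd: "g = {b,c,d}" using card3_sub_eq[OF \<open>card g = 3\<close>] g d bc by auto
  have "d \<noteq> a" using gd g(3) by auto
  thus ?thesis using gd g d bc unfolding good_def by auto
qed

lemma good_rev: "good F a b c \<Longrightarrow> good F c b a"
  unfolding good_def by (auto simp: insert_commute)
lemma good_rot: "good F a b c \<Longrightarrow> good F b c a"
  unfolding good_def by (auto simp: insert_commute)

lemma zz_shift_lem: "zz F z \<Longrightarrow> zz F (zz_shift z k)"
  unfolding zz_def zz_shift_def
proof
  fix i assume "\<forall>i. good F (z i) (z (i + 1)) (z (i + 2)) \<and> z (i + 3) \<noteq> z i"
  from this[rule_format, of "i+k"] show "good F (z (i + k)) (z (i + 1 + k)) (z (i + 2 + k)) \<and> z (i + 3 + k) \<noteq> z (i + k)"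
    by (simp add: ac_simps)
qed

lemma zz_rev_lem: "zz F z \<Longrightarrow> zz F (zz_rev z)"
  unfolding zz_def zz_rev_def
proof
  fix i assume A: "\<forall>i. good F (z i) (z (i + 1)) (z (i + 2)) \<and> z (i + 3) \<noteq> z i"
  have e: "-(i+2)+1 = -(i+1::int)" "-(i+2)+2 = -i" "-(i+3)+3 = -i" by simp_all
  from A[rule_format, of "-(i+2)"] have "good F (z (-(i+2))) (z (-(i+2)+1)) (z (-(i+2)+2))" by blast
  hence "good F (z (-(i+2))) (z (-(i+1))) (z (-i))" unfolding e .
  hence "good F (z (-i)) (z (-(i+1))) (z (-(i+2)))" by (rule good_rev)
  moreover from A[rule_format, of "-(i+3)"] have "z (-(i+3)+3) \<noteq> z (-(i+3))" by blast
  hence "z (-i) \<noteq> z (-(i+3))" unfolding e .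
  ultimately show "good F (z (- i)) (z (- (i + 1))) (z (- (i + 2))) \<and> z (- (i + 3)) \<noteq> z (- i)"
    by simp
qed

lemma zz_fwd:
  assumes "zz F z" "zz F z'" "z i = z' i" "z (i+1) = z' (i+1)" "z (i+2) = z' (i+2)"
  shows "z (i+3) = z' (i+3)"
proof -
  from assms(1) have g0: "good F (z i) (z (i+1)) (z (i+2))" and n0: "z (i+3) \<noteq> z i"
    and g1: "good F (z (i+1)) (z (i+2)) (z (i+3))"
    unfolding zz_def by (auto dest: spec[of _ "i+1"] simp: add.assoc)
  from assms(2) have n0': "z' (i+3) \<noteq> z' i"
    and g1': "good F (z' (i+1)) (z' (i+2)) (z' (i+3))"
    unfolding zz_def by (auto dest: spec[of _ "i+1"] simp: add.assoc)
  let ?f = "{z i, z (i+1), z (i+2)}" and ?g = "{z (i+1), z (i+2), z (i+3)}"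
    and ?h = "{z (i+1), z (i+2), z' (i+3)}"
  have "?g = ?h"
    apply (rule other_face[of ?f _ _ "z (i+1)" "z (i+2)"])
    using g0 g1 g1' n0 n0' assms(3-5) unfolding good_def by auto
  hence "z (i+3) \<in> ?h" by blast
  thus ?thesis using g1 g1' assms(3-5) unfolding good_def by auto
qed

lemma zz_bwd:
  assumes "zz F z" "zz F z'" "z (i+1) = z' (i+1)" "z (i+2) = z' (i+2)" "z (i+3) = z' (i+3)"
  shows "z i = z' i"
proof -
  have "zz_rev z (-i-3+3) = zz_rev z' (-i-3+3)"
    apply (rule zz_fwd[OF zz_rev_lem[OF assms(1)] zz_rev_lem[OF assms(2)]])
    using assms(3-5) unfolding zz_rev_def by (simp_all add: algebra_simps)
  thus ?thesis unfolding zz_rev_def by simp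
qed

lemma zz_unique:
  assumes "zz F z" "zz F z'" "z 0 = z' 0" "z 1 = z' 1" "z 2 = z' 2"
  shows "z = z'"
proof -
  have P: "z (int n) = z' (int n) \<and> z (int n + 1) = z' (int n + 1) \<and> z (int n + 2) = z' (int n + 2)" for n
  proof (induction n)
    case 0 thus ?case using assms by simp
  next
    case (Suc n)
    have "z (int n + 3) = z' (int n + 3)" using zz_fwd[OF assms(1,2)] Suc by blast
    thus ?case using Suc by (simp add: algebra_simps)
  qed
  have N: "z (- int n) = z' (- int n) \<and> z (- int n + 1) = z' (- int n + 1) \<and> z (- int n + 2) = z' (- int n + 2)" for n
  proof (induction n)
    case 0 thus ?case using assms by simp
  next
    case (Suc n)
    have e: "- int n - 1 + 1 = - int n" "- int n - 1 + 2 = - int n + 1" "- int n - 1 + 3 = - int n + 2"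
      "- int (Suc n) = - int n - 1" "- int (Suc n) + 1 = - int n" "- int (Suc n) + 2 = - int n + 1" by simp_all
    have "z (- int n - 1) = z' (- int n - 1)" using zz_bwd[OF assms(1,2), of "- int n - 1"] Suc unfolding e by blast
    thus ?case using Suc unfolding e by blast
  qed
  show ?thesis
  proof
    fix i :: int
    show "z i = z' i"
    proof (cases "i \<ge> 0")
      case True thus ?thesis using P[of "nat i"] by simp
    next
      case False thus ?thesis using N[of "nat (-i)"] by simp
    qed
  qed
qed

definition opp :: "'a \<Rightarrow> 'a \<Rightarrow> 'a \<Rightarrow> 'a" where
  "opp a b c = (SOME d. good F b c d \<and> d \<noteq> a)"

lemma opp: "good F a b c \<Longrightarrow> good F b c (opp a b c) \<and> opp a b c \<noteq> a"
  unfolding opp_def by (rule someI_ex) (rule opp_ex)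

definition nxt :: "'a \<times> 'a \<times> 'a \<Rightarrow> 'a \<times> 'a \<times> 'a" where
  "nxt t = (case t of (a,b,c) \<Rightarrow> (b, c, opp a b c))"
definition prv :: "'a \<times> 'a \<times> 'a \<Rightarrow> 'a \<times> 'a \<times> 'a" where
  "prv t = (case t of (a,b,c) \<Rightarrow> (opp c b a, a, b))"

lemma prv_good: "good F a b c \<Longrightarrow> good F (opp c b a) a b \<and> opp c b a \<noteq> c"
  using opp[OF good_rev[of a b c]] good_rot good_rev by blast

lemma zz_exists:
  assumes "good F x y w"
  shows "\<exists>z. zz F z \<and> z 0 = x \<and> z 1 = y \<and> z 2 = w"
proof -
  define T where "T n = (nxt ^^ n) (x,y,w)" for n
  define B where "B n = (prv ^^ n) (x,y,w)" for n
  define z where "z i = (if i \<ge> 0 then fst (T (nat i)) else fst (B (nat (-i))))" for i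
  have Tg: "case T n of (a,b,c) \<Rightarrow> good F a b c" for n
  proof (induction n)
    case 0 thus ?case using assms by (simp add: T_def)
  next
    case (Suc n) thus ?case using opp by (auto simp: T_def nxt_def split: prod.splits)
  qed
  have Bg: "case B n of (a,b,c) \<Rightarrow> good F a b c" for n
  proof (induction n)
    case 0 thus ?case using assms by (simp add: B_def)
  next
    case (Suc n) thus ?case using prv_good by (auto simp: B_def prv_def split: prod.splits)
  qed
  have TS: "T (Suc n) = nxt (T n)" for n by (simp add: T_def)
  have BS: "B (Suc n) = prv (B n)" for n by (simp add: B_def)
  have Tz: "T n = (z (int n), z (int n + 1), z (int n + 2))" for n
  proof -
    obtain a b c where abc: "T n = (a,b,c)" by (cases "T n") auto
    have "T (Suc n) = (b, c, opp a b c)" using TS abc by (simp add: nxt_def)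
    moreover have "T (Suc (Suc n)) = (c, opp a b c, opp b c (opp a b c))" using TS calculation by (simp add: nxt_def)
    ultimately have "z (int n + 1) = b" "z (int n + 2) = c"
      unfolding z_def by (simp_all add: nat_add_distrib)
    moreover have "z (int n) = a" using abc by (simp add: z_def)
    ultimately show ?thesis using abc by simp
  qed
  have Bz: "B n = (z (- int n), z (- int n + 1), z (- int n + 2))" for n
  proof (induction n)
    case 0 thus ?case using Tz[of 0] by (simp add: B_def T_def)
  next
    case (Suc n)
    obtain a b c where abc: "B n = (a,b,c)" by (cases "B n") auto
    have "B (Suc n) = (opp c b a, a, b)" using BS abc by (simp add: prv_def)
    moreover have "z (- int (Suc n)) = opp c b a" using calculation by (simp add: z_def nat_add_distrib)
    ultimately show ?case using Suc abc by (simp add: algebra_simps)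
  qed
  have "zz F z" unfolding zz_def
  proof
    fix i :: int
    show "good F (z i) (z (i + 1)) (z (i + 2)) \<and> z (i + 3) \<noteq> z i"
    proof (cases "i \<ge> 0")
      case True
      define n where "n = nat i"
      have i: "i = int n" using True n_def by simp
      obtain a b c where abc: "T n = (a,b,c)" by (cases "T n") auto
      have g: "good F a b c" using Tg[of n] abc by simp
      have "T (Suc n) = (b, c, opp a b c)" using TS abc by (simp add: nxt_def)
      hence "z (i+3) = opp a b c" using Tz[of "Suc n"] i by (simp add: algebra_simps)
      thus ?thesis using opp[OF g] g Tz[of n] abc i by simp
    next
      case False
      define n where "n = nat (-i) - 1"
      have i: "i = - int n - 1" using False n_def by simp
      obtain a b c where abc: "B n = (a,b,c)" by (cases "B n") auto
      have g: "good F a b c" using Bg[of n] abc by simp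
      have B1: "B (Suc n) = (opp c b a, a, b)" using BS abc by (simp add: prv_def)
      have "i+3 = - int n + 2" using i by simp
      hence h3: "z (i+3) = c" using Bz[of n] abc by (simp only: prod.inject)
      have ie: "i = - int (Suc n)" "i+1 = - int (Suc n) + 1" "i+2 = - int (Suc n) + 2" using i by simp_all
      have "(opp c b a, a, b) = (z (- int (Suc n)), z (- int (Suc n) + 1), z (- int (Suc n) + 2))"
        using B1 Bz[of "Suc n"] by metis
      hence hz: "z i = opp c b a" "z (i+1) = a" "z (i+2) = b" unfolding ie prod.inject by metis+
      show ?thesis unfolding h3 hz using prv_good[OF g] by auto
    qed
  qed
  moreover have "z 0 = x" "z 1 = y" "z 2 = w" using Tz[of 0] by (simp_all add: T_def)
  ultimately show ?thesis by blast
qed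

lemma tau_zz: "z \<in> \<tau> \<Longrightarrow> zz F z"
  using zo zigzag_zz[of F z] c3 unfolding z_orientation_def by blast
lemma tau_shift: "z \<in> \<tau> \<Longrightarrow> zz_shift z k \<in> \<tau>"
  using zo unfolding z_orientation_def by blast
lemma tau_orient: "zz F z \<Longrightarrow> (z \<in> \<tau> \<longleftrightarrow> zz_rev z \<notin> \<tau>)"
  using zo zigzag_zz[of F z] c3 unfolding z_orientation_def by blast
lemma shift_shift: "zz_shift (zz_shift z k) l = zz_shift z (k + l)"
  unfolding zz_shift_def by (simp add: ac_simps)
lemma shift0: "zz_shift z 0 = z" unfolding zz_shift_def by simp

definition Tr :: "'a \<Rightarrow> 'a \<Rightarrow> 'a \<Rightarrow> bool" where
  "Tr a b c \<longleftrightarrow> (\<exists>z\<in>\<tau>. z 0 = a \<and> z 1 = b \<and> z 2 = c)"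

lemma Tr_xor:
  assumes g: "good F x y w"
  shows "Tr x y w \<longleftrightarrow> \<not> Tr w y x"
proof -
  obtain z where z: "zz F z" "z 0 = x" "z 1 = y" "z 2 = w" using zz_exists[OF g] by blast
  define r where "r = zz_shift (zz_rev z) (-2)"
  have rz: "zz F r" unfolding r_def by (intro zz_shift_lem zz_rev_lem z(1))
  have r: "r 0 = w" "r 1 = y" "r 2 = x" using z unfolding r_def zz_shift_def zz_rev_def by simp_all
  have rr: "zz_shift r 2 = zz_rev z" unfolding r_def shift_shift by (simp add: shift0)
  have rr': "zz_shift (zz_rev z) (-2) = r" unfolding r_def ..
  show ?thesis
  proof
    assume "Tr x y w"
    then obtain z1 where z1: "z1 \<in> \<tau>" "z1 0 = x" "z1 1 = y" "z1 2 = w" unfolding Tr_def by blast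
    have "z1 = z" using zz_unique[OF tau_zz[OF z1(1)] z(1)] z1 z by simp
    hence zt: "z \<in> \<tau>" using z1 by simp
    show "\<not> Tr w y x"
    proof
      assume "Tr w y x"
      then obtain z2 where z2: "z2 \<in> \<tau>" "z2 0 = w" "z2 1 = y" "z2 2 = x" unfolding Tr_def by blast
      have "z2 = r" using zz_unique[OF tau_zz[OF z2(1)] rz] z2 r by simp
      hence "zz_rev z \<in> \<tau>" using tau_shift[of z2 2] z2(1) rr by simp
      thus False using zt tau_orient[OF z(1)] by blast
    qed
  next
    assume nt: "\<not> Tr w y x"
    have "r \<notin> \<tau>" using nt r unfolding Tr_def by blast
    hence "zz_rev z \<notin> \<tau>" using tau_shift[of "zz_rev z" "-2"] rr' by auto
    hence "z \<in> \<tau>" using tau_orient[OF z(1)] by blast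
    thus "Tr x y w" using z unfolding Tr_def by blast
  qed
qed

lemma card_le1:
  assumes "\<And>a b. a \<in> X \<Longrightarrow> b \<in> X \<Longrightarrow> a = b"
  shows "card X = (if X = {} then 0 else 1)" "finite X"
proof -
  show "card X = (if X = {} then 0 else 1)"
  proof (cases "X = {}")
    case False
    then obtain a where "a \<in> X" by auto
    hence "X = {a}" using assms by auto
    thus ?thesis by simp
  qed simp
  show "finite X"
  proof (cases "X = {}")
    case False
    then obtain a where "a \<in> X" by auto
    hence "X = {a}" using assms by auto
    thus ?thesis by simp
  qed simp
qed

lemma trav_count:
  assumes g: "good F x y w"
  shows "traversals \<tau> x y = (if Tr x y w then 1 else 0) + (if Tr w x y then 1 else 0)"
proof -
  define S where "S = {z\<in>\<tau>. z 0 = x \<and> z 1 = y}"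
  define A where "A = {z\<in>S. z 2 = w}"
  define B where "B = {z\<in>S. z (-1) = w}"
  have SAB: "S = A \<union> B"
  proof -
    have "z \<in> A \<union> B" if zS: "z \<in> S" for z
    proof (rule ccontr)
      assume nAB: "z \<notin> A \<union> B"
      have zz: "zz F z" using zS tau_zz unfolding S_def by blast
      from zz have g0: "good F (z 0) (z 1) (z 2)" and gm: "good F (z (-1)) (z 0) (z 1)"
        and nm: "z 2 \<noteq> z (-1)"
        unfolding zz_def by (auto dest: spec[of _ 0] spec[of _ "-1"])
      have zx: "z 0 = x" "z 1 = y" using zS unfolding S_def by auto
      have nw: "z 2 \<noteq> w" "z (-1) \<noteq> w" using nAB zS unfolding A_def B_def by auto
      have G0: "{x,y,z 2} \<in> F" "x \<noteq> y" "x \<noteq> z 2" "y \<noteq> z 2" using g0 zx unfolding good_def by auto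
      have G1: "{z (-1),x,y} \<in> F" "z (-1) \<noteq> x" "z (-1) \<noteq> y" using gm zx unfolding good_def by auto
      have G: "{x,y,w} \<in> F" "x \<noteq> w" "y \<noteq> w" using g unfolding good_def by auto
      have d1: "{x,y,w} \<noteq> {x,y,z 2}"
      proof
        assume "{x,y,w} = {x,y,z 2}"
        hence "w \<in> {x,y,z 2}" by blast
        thus False using G nw by blast
      qed
      have d2: "{x,y,w} \<noteq> {z (-1),x,y}"
      proof
        assume "{x,y,w} = {z (-1),x,y}"
        hence "w \<in> {z (-1),x,y}" by blast
        thus False using G nw by blast
      qed
      have "{x,y,z 2} = {z (-1), x, y}"
        by (rule other_face[of "{x,y,w}" _ _ x y]) (use G G0 G1 d1 d2 in auto)
      hence "z 2 \<in> {z (-1), x, y}" by blast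
      thus False using nm G0 by blast
    qed
    thus ?thesis unfolding A_def B_def by auto
  qed
  have disj: "A \<inter> B = {}"
  proof (rule ccontr)
    assume "A \<inter> B \<noteq> {}"
    then obtain z where z: "z \<in> \<tau>" "z 2 = w" "z (-1) = w" unfolding A_def B_def S_def by blast
    from tau_zz[OF z(1)] have "z (-1+3) \<noteq> z (-1)" unfolding zz_def by blast
    thus False using z by simp
  qed
  have Auniq: "a = b" if ab: "a \<in> A" "b \<in> A" for a b
  proof -
    have "a \<in> \<tau>" "b \<in> \<tau>" using ab unfolding A_def S_def by auto
    thus ?thesis using zz_unique[OF tau_zz tau_zz] ab unfolding A_def S_def by auto
  qed
  have Buniq: "a = b" if ab: "a \<in> B" "b \<in> B" for a b
  proof -
    have "zz_shift a (-1) = zz_shift b (-1)"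
    proof (rule zz_unique[OF zz_shift_lem[OF tau_zz] zz_shift_lem[OF tau_zz]])
      show "a \<in> \<tau>" "b \<in> \<tau>" using ab unfolding B_def S_def by auto
    qed (use ab in \<open>simp_all add: B_def S_def zz_shift_def\<close>)
    hence "zz_shift (zz_shift a (-1)) 1 = zz_shift (zz_shift b (-1)) 1" by simp
    thus ?thesis unfolding shift_shift by (simp add: shift0)
  qed
  have An: "A \<noteq> {} \<longleftrightarrow> Tr x y w" unfolding A_def S_def Tr_def by auto
  have Bn: "B \<noteq> {} \<longleftrightarrow> Tr w x y"
  proof
    assume "B \<noteq> {}"
    then obtain z where "z \<in> B" by auto
    hence zB: "z \<in> \<tau>" "z (-1) = w" "z 0 = x" "z 1 = y" unfolding B_def S_def by auto
    have "zz_shift z (-1) \<in> \<tau>" by (rule tau_shift[OF zB(1)])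
    moreover have "zz_shift z (-1) 0 = w" "zz_shift z (-1) 1 = x" "zz_shift z (-1) 2 = y"
      using zB unfolding zz_shift_def by auto
    ultimately show "Tr w x y" unfolding Tr_def by blast
  next
    assume "Tr w x y"
    then obtain z where z: "z \<in> \<tau>" "z 0 = w" "z 1 = x" "z 2 = y" unfolding Tr_def by blast
    hence "zz_shift z 1 \<in> B" using tau_shift unfolding B_def S_def zz_shift_def by auto
    thus "B \<noteq> {}" by auto
  qed
  have "traversals \<tau> x y = card S" unfolding traversals_def S_def ..
  also have "\<dots> = card A + card B" unfolding SAB
    by (rule card_Un_disjoint[OF card_le1(2) card_le1(2) disj]) (use Auniq Buniq in blast)+
  also have "\<dots> = (if Tr x y w then 1 else 0) + (if Tr w x y then 1 else 0)"
    using card_le1(1)[of A] card_le1(1)[of B] Auniq Buniq An Bn by auto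
  finally show ?thesis .
qed

lemma finV: "finite (tri_vertices F)"
  unfolding tri_vertices_def using finF c3 by (metis card.infinite finite_Union zero_neq_numeral)

lemma edge_vert: "{a,b} \<in> tri_edges F \<Longrightarrow> a \<in> tri_vertices F \<and> b \<in> tri_vertices F"
  unfolding tri_edges_def tri_vertices_def by auto

lemma arc_lem:
  assumes e: "{a,b} \<in> tri_edges F" and t1: "traversals \<tau> a b \<ge> 1"
    and t2: "traversals \<tau> a b + traversals \<tau> b a = 2"
  shows "zarc F \<tau> a b"
proof -
  have fin1: "finite {u. typeI_edge F \<tau> a u}"
    by (rule finite_subset[OF _ finV]) (auto simp: typeI_edge_def dest: edge_vert)
  have fin2: "finite {u. typeII_edge F \<tau> a u}"
    by (rule finite_subset[OF _ finV]) (auto simp: typeII_edge_def dest: edge_vert)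
  show ?thesis
  proof (cases "traversals \<tau> a b = 1")
    case True
    hence T: "typeI_edge F \<tau> a b" using e t2 unfolding typeI_edge_def by simp
    hence "b \<in> {u. typeI_edge F \<tau> a u}" by simp
    hence "card {u. typeI_edge F \<tau> a u} \<ge> 1" using fin1
      by (metis One_nat_def Suc_leI card_gt_0_iff empty_iff)
    hence "zdeg F \<tau> a > 0" unfolding zdeg_def by simp
    thus ?thesis using T unfolding zarc_def ztrans_def by simp
  next
    case False
    hence T: "typeII_edge F \<tau> a b" "\<not> typeI_edge F \<tau> a b" using e t1 t2 unfolding typeI_edge_def typeII_edge_def by auto
    hence "b \<in> {u. typeII_edge F \<tau> a u}" by simp
    hence "card {u. typeII_edge F \<tau> a u} \<ge> 1" using fin2
      by (metis One_nat_def Suc_leI card_gt_0_iff empty_iff)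
    hence "zdeg F \<tau> a > 0" unfolding zdeg_def by simp
    thus ?thesis using T unfolding zarc_def ztrans_def by simp
  qed
qed

lemma face_lem:
  assumes g: "good F a b c"
  shows "(zarc F \<tau> a b \<and> zarc F \<tau> b c \<and> zarc F \<tau> c a) \<or> (zarc F \<tau> b a \<and> zarc F \<tau> c b \<and> zarc F \<tau> a c)"
proof -
  have g1: "good F b a c" "good F c a b" "good F b c a" "good F c b a" "good F a c b"
    using good_rot[OF good_rev[OF g]] good_rot[OF good_rot[OF g]] good_rot[OF g] good_rev[OF g]
      good_rev[OF good_rot[OF g]] by auto
  define Ca where "Ca = Tr c a b"
  define Cb where "Cb = Tr a b c"
  define Cc where "Cc = Tr b c a"
  have xa: "Tr b a c \<longleftrightarrow> \<not> Ca" using Tr_xor[OF g1(2)] unfolding Ca_def by blast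
  have xb: "Tr c b a \<longleftrightarrow> \<not> Cb" using Tr_xor[OF g] unfolding Cb_def by blast
  have xc: "Tr a c b \<longleftrightarrow> \<not> Cc" using Tr_xor[OF g1(3)] unfolding Cc_def by blast
  have tab: "traversals \<tau> a b = (if Cb then 1 else 0) + (if Ca then 1 else 0)"
    using trav_count[OF g] unfolding Ca_def Cb_def .
  have tba: "traversals \<tau> b a = (if Ca then 0 else 1) + (if Cb then 0 else 1)"
    using trav_count[OF g1(1)] xa xb by simp
  have tbc: "traversals \<tau> b c = (if Cc then 1 else 0) + (if Cb then 1 else 0)"
    using trav_count[OF g1(3)] unfolding Cc_def Cb_def .
  have tcb: "traversals \<tau> c b = (if Cb then 0 else 1) + (if Cc then 0 else 1)"
    using trav_count[OF g1(4)] xb xc by simp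
  have tca: "traversals \<tau> c a = (if Ca then 1 else 0) + (if Cc then 1 else 0)"
    using trav_count[OF g1(2)] unfolding Ca_def Cc_def .
  have tac: "traversals \<tau> a c = (if Cc then 0 else 1) + (if Ca then 0 else 1)"
    using trav_count[OF g1(5)] xc xa by simp
  have E: "{a,b} \<in> tri_edges F" "{b,a} \<in> tri_edges F" "{b,c} \<in> tri_edges F" "{c,b} \<in> tri_edges F"
    "{c,a} \<in> tri_edges F" "{a,c} \<in> tri_edges F"
  proof -
    have F: "{a,b,c} \<in> F" "a \<noteq> b" "b \<noteq> c" "a \<noteq> c" using g unfolding good_def by auto
    show "{a,b} \<in> tri_edges F" by (rule edgeI) (use F in auto)
    show "{b,a} \<in> tri_edges F" by (rule edgeI) (use F in auto)
    show "{b,c} \<in> tri_edges F" by (rule edgeI) (use F in auto)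
    show "{c,b} \<in> tri_edges F" by (rule edgeI) (use F in auto)
    show "{c,a} \<in> tri_edges F" by (rule edgeI) (use F in auto)
    show "{a,c} \<in> tri_edges F" by (rule edgeI) (use F in auto)
  qed
  have s: "traversals \<tau> a b + traversals \<tau> b a = 2" "traversals \<tau> b a + traversals \<tau> a b = 2"
     "traversals \<tau> b c + traversals \<tau> c b = 2" "traversals \<tau> c b + traversals \<tau> b c = 2"
     "traversals \<tau> c a + traversals \<tau> a c = 2" "traversals \<tau> a c + traversals \<tau> c a = 2"
    unfolding tab tba tbc tcb tca tac by simp_all
  have r1: "Ca \<or> Cb \<Longrightarrow> zarc F \<tau> a b" by (rule arc_lem[OF E(1) _ s(1)]) (auto simp: tab)
  have r2: "\<not>Ca \<or> \<not>Cb \<Longrightarrow> zarc F \<tau> b a" by (rule arc_lem[OF E(2) _ s(2)]) (auto simp: tba)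
  have r3: "Cb \<or> Cc \<Longrightarrow> zarc F \<tau> b c" by (rule arc_lem[OF E(3) _ s(3)]) (auto simp: tbc)
  have r4: "\<not>Cb \<or> \<not>Cc \<Longrightarrow> zarc F \<tau> c b" by (rule arc_lem[OF E(4) _ s(4)]) (auto simp: tcb)
  have r5: "Cc \<or> Ca \<Longrightarrow> zarc F \<tau> c a" by (rule arc_lem[OF E(5) _ s(5)]) (auto simp: tca)
  have r6: "\<not>Cc \<or> \<not>Ca \<Longrightarrow> zarc F \<tau> a c" by (rule arc_lem[OF E(6) _ s(6)]) (auto simp: tac)
  show ?thesis using r1 r2 r3 r4 r5 r6 by blast
qed

lemma ztrans_nonneg: "ztrans F \<tau> x y \<ge> 0"
  unfolding ztrans_def by auto

lemma arc_V: "zarc F \<tau> x y \<Longrightarrow> x \<in> tri_vertices F \<and> y \<in> tri_vertices F"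
  unfolding zarc_def ztrans_def typeI_edge_def typeII_edge_def
  by (auto split: if_splits dest: edge_vert)

lemma third:
  assumes "f \<in> F" "u \<noteq> w" "{u,w} \<subseteq> f"
  shows "\<exists>c. good F u w c"
proof -
  have "card f = 3" using assms c3 by auto
  have "\<not> f \<subseteq> {u,w}"
  proof
    assume "f \<subseteq> {u,w}"
    hence "card f \<le> card {u,w}" by (intro card_mono) auto
    also have "\<dots> \<le> 2" by (simp add: card_insert_if)
    finally show False using \<open>card f = 3\<close> by simp
  qed
  then obtain c where c: "c \<in> f" "c \<noteq> u" "c \<noteq> w" by auto
  have "f = {u,w,c}" using card3_sub_eq[OF \<open>card f = 3\<close>] assms c by auto
  thus ?thesis using assms c unfolding good_def by auto
qed

abbreviation "R \<equiv> {(x,y). zarc F \<tau> x y}"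

lemma strong:
  assumes "u \<in> tri_vertices F" "w \<in> tri_vertices F"
  shows "(u,w) \<in> R\<^sup>*"
proof -
  have "graph_adj F \<subseteq> R\<^sup>*"
  proof
    fix p assume "p \<in> graph_adj F"
    then obtain u w where p: "p = (u,w)" "{u,w} \<in> tri_edges F" unfolding graph_adj_def by auto
    then obtain f where f: "f \<in> F" "{u,w} \<subseteq> f" "card {u,w} = 2" unfolding tri_edges_def by auto
    have "u \<noteq> w"
    proof
      assume "u = w" thus False using f(3) by simp
    qed
    then obtain c where "good F u w c" using third f by blast
    from face_lem[OF this] have "zarc F \<tau> u w \<or> (zarc F \<tau> u c \<and> zarc F \<tau> c w)" by blast
    thus "p \<in> R\<^sup>*" unfolding p
    proof
      assume "zarc F \<tau> u w" thus "(u,w) \<in> R\<^sup>*" by auto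
    next
      assume "zarc F \<tau> u c \<and> zarc F \<tau> c w"
      hence "(u,c) \<in> R\<^sup>*" "(c,w) \<in> R" by auto
      thus "(u,w) \<in> R\<^sup>*" by (rule rtrancl.rtrancl_into_rtrancl)
    qed
  qed
  hence "(graph_adj F)\<^sup>* \<subseteq> (R\<^sup>*)\<^sup>*" by (rule rtrancl_mono)
  hence "(graph_adj F)\<^sup>* \<subseteq> R\<^sup>*" by simp
  moreover have "(u,w) \<in> (graph_adj F)\<^sup>*" using cst assms unfolding closed_surface_triangulation_def by blast
  ultimately show ?thesis by blast
qed

lemma cyc3_aux: "zarc F \<tau> a b \<Longrightarrow> zarc F \<tau> b c \<Longrightarrow> zarc F \<tau> c a \<Longrightarrow> (a,a) \<in> R ^^ 3"
  unfolding numeral_3_eq_3 relpow.simps by blast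

lemma cyc3_good: "good F a b c \<Longrightarrow> (a,a) \<in> R ^^ 3"
  using face_lem[of a b c] cyc3_aux[of a b c] cyc3_aux[of a c b] by blast

lemma cyc3:
  assumes "v \<in> tri_vertices F"
  shows "(v,v) \<in> R ^^ 3"
proof -
  obtain f where f: "f \<in> F" "v \<in> f" using assms unfolding tri_vertices_def by auto
  then obtain x y z where xyz: "f = {x,y,z}" "x \<noteq> y" "y \<noteq> z" "x \<noteq> z" using c3 card_3_iff by metis
  hence g: "good F x y z" using f unfolding good_def by auto
  consider "v = x" | "v = y" | "v = z" using f xyz by auto
  thus ?thesis
    using cyc3_good[OF g] cyc3_good[OF good_rot[OF g]] cyc3_good[OF good_rot[OF good_rot[OF g]]] by cases auto
qed

end


theorem proposition2:
  fixes F :: "'a set set" and \<tau> :: "(int \<Rightarrow> 'a) set"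
  assumes "closed_surface_triangulation F"
    and "z_orientation F \<tau>"
  shows "(mc_aperiodic (tri_vertices F) (ztrans F \<tau>) \<longleftrightarrow> mc_ergodic (tri_vertices F) (ztrans F \<tau>))
       \<and> (mc_ergodic (tri_vertices F) (ztrans F \<tau>) \<longleftrightarrow>
            (\<exists>xs. closed_walk (zarc F \<tau>) xs \<and> \<not> 3 dvd walk_length xs))"
proof -
  interpret tri F \<tau> using assms by unfold_locales
  define V where "V = tri_vertices F"
  define P where "P = ztrans F \<tau>"
  have RP: "{(x,y). P x y > 0} = R" unfolding P_def zarc_def by simp
  have key: "nstep V P n i j > 0 \<longleftrightarrow> (i,j) \<in> R ^^ n" for n i j
    unfolding RP[symmetric] V_def
    by (rule nstep_pos[OF finV]) (use ztrans_nonneg arc_V in \<open>auto simp: P_def zarc_def\<close>)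
  have irr: "mc_irreducible V P"
    unfolding mc_irreducible_def key using strong unfolding V_def by (meson rtrancl_power)
  have P1: "mc_aperiodic V P \<longleftrightarrow> mc_ergodic V P" using irr unfolding mc_ergodic_def by blast
  have P2: "mc_aperiodic V P \<longleftrightarrow> (\<exists>xs. closed_walk (zarc F \<tau>) xs \<and> \<not> 3 dvd walk_length xs)"
  proof
    assume ap: "mc_aperiodic V P"
    obtain f where f: "f \<in> F" using assms(1) unfolding closed_surface_triangulation_def by auto
    hence "card f = 3" by (rule c3)
    then obtain i where "i \<in> f" by (metis card.empty ex_in_conv zero_neq_numeral)
    hence iV: "i \<in> V" using f unfolding V_def tri_vertices_def by auto
    define N where "N = {n. n > 0 \<and> nstep V P n i i > 0}"
    have g1: "Gcd N = 1" using ap iV unfolding mc_aperiodic_def mc_period_def N_def by blast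
    have "\<exists>n\<in>N. \<not> 3 dvd n"
    proof (rule ccontr)
      assume "\<not> ?thesis"
      hence "(3::nat) dvd Gcd N" by (intro Gcd_greatest) blast
      thus False using g1 by simp
    qed
    then obtain n where n: "n > 0" "(i,i) \<in> R ^^ n" "\<not> 3 dvd n" unfolding N_def key by blast
    then obtain g where g: "g 0 = i" "g n = i" "\<forall>k<n. (g k, g (Suc k)) \<in> R"
      unfolding relpow_fun_conv by blast
    define xs where "xs = map g [0..<Suc n]"
    have len: "length xs = Suc n" unfolding xs_def by simp
    have nth: "k \<le> n \<Longrightarrow> xs ! k = g k" for k unfolding xs_def by (simp del: upt_Suc)
    have "closed_walk (zarc F \<tau>) xs"
      unfolding closed_walk_def
    proof (intro conjI allI impI)
      show "2 \<le> length xs" using len n by simp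
      have "xs \<noteq> []" using len by auto
      hence "hd xs = g 0" using nth[of 0] by (simp add: hd_conv_nth)
      moreover have "last xs = g n" using nth[of n] len \<open>xs \<noteq> []\<close> by (simp add: last_conv_nth)
      ultimately show "hd xs = last xs" using g by simp
      fix k assume "k < length xs - 1"
      hence "k < n" using len by simp
      thus "zarc F \<tau> (xs ! k) (xs ! (k + 1))" using g(3) nth[of k] nth[of "Suc k"] by auto
    qed
    moreover have "walk_length xs = n" unfolding walk_length_def len by simp
    ultimately show "\<exists>xs. closed_walk (zarc F \<tau>) xs \<and> \<not> 3 dvd walk_length xs" using n by auto
  next
    assume "\<exists>xs. closed_walk (zarc F \<tau>) xs \<and> \<not> 3 dvd walk_length xs"
    then obtain xs where cw: "closed_walk (zarc F \<tau>) xs" and nd: "\<not> 3 dvd walk_length xs" by blast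
    define L where "L = walk_length xs"
    define j where "j = xs ! 0"
    have lenx: "length xs = Suc L" "L \<ge> 1" using cw unfolding closed_walk_def L_def walk_length_def by auto
    have st: "\<forall>k<L. (xs ! k, xs ! Suc k) \<in> R" using cw lenx unfolding closed_walk_def by auto
    have hl: "xs ! L = j" using cw lenx unfolding closed_walk_def j_def
      by (metis diff_Suc_1 hd_conv_nth last_conv_nth list.size(3) old.nat.distinct(1))
    have jj: "(j,j) \<in> R ^^ L" unfolding relpow_fun_conv
      by (rule exI[of _ "\<lambda>k. xs ! k"]) (use st hl j_def in auto)
    have jV: "j \<in> V" using st lenx arc_V unfolding j_def V_def by fastforce
    show "mc_aperiodic V P" unfolding mc_aperiodic_def mc_period_def
    proof
      fix i assume iV: "i \<in> V"
      define N where "N = {n. n > 0 \<and> nstep V P n i i > 0}"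
      obtain a where a: "(i,j) \<in> R ^^ a" using strong[of i j] iV jV unfolding V_def rtrancl_power by blast
      obtain b where b: "(j,i) \<in> R ^^ b" using strong[of j i] iV jV unfolding V_def rtrancl_power by blast
      have "(i,i) \<in> R ^^ (a + L + b)" using a jj b unfolding relpow_add by blast
      hence m1: "a + L + b \<in> N" unfolding N_def key using lenx by simp
      have "(i,i) \<in> R ^^ (a + L + L + b)" using a jj b unfolding relpow_add by blast
      hence m2: "a + L + L + b \<in> N" unfolding N_def key using lenx by simp
      have "(i,i) \<in> R ^^ 3" using cyc3 iV unfolding V_def by blast
      hence m3: "3 \<in> N" unfolding N_def key by simp
      have d1: "Gcd N dvd a + L + b" "Gcd N dvd a + L + L + b" "Gcd N dvd 3" using m1 m2 m3 Gcd_dvd by blast+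
      have "Gcd N dvd (a + L + L + b) - (a + L + b)" using d1 by (intro dvd_diff_nat)
      hence dL: "Gcd N dvd L" by simp
      have "Gcd N \<le> 3" using d1(3) by (intro dvd_imp_le) auto
      moreover have "Gcd N \<noteq> 0" using d1(3) by (intro notI) simp
      moreover have "Gcd N \<noteq> 2" using d1(3) by auto
      moreover have "Gcd N \<noteq> 3" using dL nd unfolding L_def by auto
      ultimately show "Gcd N = 1" by linarith
    qed
  qed
  show ?thesis using P1 P2 unfolding V_def P_def by blast
qed

end
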